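(* Let $\mathsf{P}\ge 0$ be a nonnegative random variable with Laplace transform $\mathcal{L}_{\mathsf{P}}(s)=\mathbb{E}[e^{-s\mathsf{P}}]$, and let $\tilde{\mathsf{J}}$ be a Gamma random variable with shape $k>0$ and scale $\theta>0$, i.e. $\mathbb{P}(\tilde{\mathsf{J}}\le z)=1-\Gamma(k,z/\theta)/\Gamma(k)$ for $z\ge0$, independent of $\mathsf{P}$. For $s_0>0$ and integer $m\ge0$ define $$\mathcal{L}^{(m)}_{\mathsf{P}}(s_0)=\frac{\partial^m}{\partial s^m}\mathcal{L}_{\mathsf{P}}(-s)\Big|_{s=-s_0}=\mathbb{E}\big[\mathsf{P}^m e^{-s_0\mathsf{P}}\big],$$ and for an integer $n\ge 0$ let $S(n)=\sum_{m=0}^{n-1}\mathcal{L}^{(m)}_{\mathsf{P}}\big(\tfrac{1}{\theta\beta}\big)\frac{(\theta\beta)^{-m}}{m!}$ (with $S(0)=0$). Then for every $\beta>0$, $$S(\lfloor k\rfloor)\;\le\;\mathbb{P}\big(\mathsf{P}/\tilde{\mathsf{J}}\le\beta\big)\;\le\;S(\lceil k\rceil).$$ In particular, with $\mathsf{P}$ the useful received power and $\tilde{\mathsf{J}}$ the Gamma approximation of the interference-plus-noise $\mathsf{J}_{\mathcal C}+\mathsf{J}_{\bar{\mathcal C}}+1/\eta$, this bounds the $\mathtt{SINR}$ distribution $\mathbb{P}(\mathtt{SINR}\le\beta)$.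
   Context: $\Gamma(a,x)=\int_x^\infty t^{a-1}e^{-t}\,dt$ denotes the upper incomplete Gamma function and $\Gamma(a)=\Gamma(a,0)$. In the paper's model, $\mathtt{SINR}=\mathsf{P}/(\mathsf{J}_{\mathcal C}+\mathsf{J}_{\bar{\mathcal C}}+1/\eta)$ and the denominator is replaced by an independent Gamma random variable $\tilde{\mathsf J}$ with the parameters $k,\theta$ obtained by matching its first two moments (see the companion statement of Proposition 1); here $\mathsf P=\sum_{i:\mathsf x_i\in\Phi\cap b(o,D)}\mathsf g_i\|\mathsf x_i\|^{-\alpha}\mathbf 1(\mathsf g_i\|\mathsf x_i\|^{-\alpha}\ge T)$ for a Poisson point process $\Phi=\{\mathsf x_i\}$ of base stations in $\mathbb R^2$ with i.i.d. marks $\mathsf g_i\ge0$, path loss exponent $\alpha>2$, cooperation radius $D>0$ and activation threshold $T\ge 0$. *)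

theory Defs
  imports "HOL-Probability.Probability"
begin

definition upper_inc_Gamma :: "real \<Rightarrow> real \<Rightarrow> real" where
  "upper_inc_Gamma a x = (LINT t:{x..}|lborel. t powr (a - 1) * exp (- t))"

text \<open>m-th derivative of s \<mapsto> L_P(-s) evaluated at s = -s0, i.e. E[P^m exp(-s0 P)].\<close>
definition laplace_deriv :: "'a measure \<Rightarrow> ('a \<Rightarrow> real) \<Rightarrow> nat \<Rightarrow> real \<Rightarrow> real" where
  "laplace_deriv M P m s0 = (\<integral>\<omega>. (P \<omega>) ^ m * exp (- s0 * P \<omega>) \<partial>M)"

definition S_sum :: "'a measure \<Rightarrow> ('a \<Rightarrow> real) \<Rightarrow> real \<Rightarrow> real \<Rightarrow> nat \<Rightarrow> real" where
  "S_sum M P \<theta> \<beta> n =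
     (\<Sum>m<n. laplace_deriv M P m (1 / (\<theta> * \<beta>)) * (\<theta> * \<beta>) powi (- int m) / fact m)"

end

theory Submission imports Defs begin

definition gN :: "real \<Rightarrow> real set \<Rightarrow> ennreal" where
  "gN a S = (\<integral>\<^sup>+ t. ennreal (t powr (a-1) * exp(-t)) * indicator S t \<partial>lborel)"

lemma gN_full: "a > 0 \<Longrightarrow> gN a {0..} = ennreal (Gamma a)"
  unfolding gN_def Gamma_conv_nn_integral_real
  by (intro nn_integral_cong) (auto split: split_indicator simp: exp_minus divide_inverse)

lemma gN_mono: "S \<subseteq> T \<Longrightarrow> gN a S \<le> gN a T"
  unfolding gN_def
  by (intro nn_integral_mono mult_left_mono) (auto split: split_indicator)

lemma gN_fin: "a > 0 \<Longrightarrow> S \<subseteq> {0..} \<Longrightarrow> gN a S < \<infinity>"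
  using gN_mono[of S "{0..}" a] gN_full[of a] by (simp add: top.not_eq_extremum le_less_trans)

lemma gN_real: "a > 0 \<Longrightarrow> S \<subseteq> {0..} \<Longrightarrow> gN a S = ennreal (enn2real (gN a S))"
  using gN_fin[of a S] by (simp add: ennreal_enn2real_if)

lemma gN_cong_pt: "(\<And>t. t \<noteq> c \<Longrightarrow> (t\<in>S \<longleftrightarrow> t\<in>T)) \<Longrightarrow> gN a S = gN a T"
  unfolding gN_def
  apply (intro nn_integral_cong_AE)
  using AE_lborel_singleton[of c]
  by eventually_elim (auto split: split_indicator)

lemma gN_split: "S \<in> sets borel \<Longrightarrow> T \<in> sets borel \<Longrightarrow> S \<inter> T = {} \<Longrightarrow> gN a (S \<union> T) = gN a S + gN a T"
  unfolding gN_def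
  apply (subst nn_integral_add[symmetric])
    apply (auto intro!: nn_integral_cong split: split_indicator)
  done

lemma ub_eq: assumes "a > 0" "y \<ge> 0"
  shows "ennreal (upper_inc_Gamma a y) = gN a {y..}" "upper_inc_Gamma a y \<ge> 0"
proof -
  have eq: "gN a {y..} = (\<integral>\<^sup>+ t. ennreal (indicator {y..} t *\<^sub>R (t powr (a-1) * exp(-t))) \<partial>lborel)"
    unfolding gN_def by (intro nn_integral_cong) (auto split: split_indicator)
  have int: "integrable lborel (\<lambda>t. indicator {y..} t *\<^sub>R (t powr (a-1) * exp(-t)))"
    apply (rule integrableI_nonneg)
    using gN_fin[of a "{y..}"] assms eq by auto
  have "ennreal (upper_inc_Gamma a y) = (\<integral>\<^sup>+ t. ennreal (indicator {y..} t *\<^sub>R (t powr (a-1) * exp(-t))) \<partial>lborel)"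
    unfolding upper_inc_Gamma_def set_lebesgue_integral_def
    by (rule nn_integral_eq_integral[OF int, symmetric]) auto
  then show "ennreal (upper_inc_Gamma a y) = gN a {y..}" using eq by simp
  show "upper_inc_Gamma a y \<ge> 0"
    unfolding upper_inc_Gamma_def set_lebesgue_integral_def
    by (intro integral_nonneg_AE) auto
qed


lemma gN_Icc_int: assumes "y \<ge> 0"
  shows "gN (real (Suc j)) {0..y} = ennreal ((1 - (\<Sum>n\<le>j. (y^n * exp (-y)) / fact n)) * fact j)"
proof -
  have "gN (real (Suc j)) {0..y} = (\<integral>\<^sup>+x. ennreal (x^j * exp (-x)) * indicator {0 .. y} x \<partial>lborel)"
    unfolding gN_def
    apply (intro nn_integral_cong_AE)
    using AE_lborel_singleton[of 0]
    by eventually_elim (auto split: split_indicator simp: powr_realpow)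
  also have "\<dots> = ennreal ((1 - (\<Sum>n\<le>j. (y^n * exp (-y)) / fact n)) * fact j)"
    using nn_intergal_power_times_exp_Icc[OF assms, of j] by simp
  finally show ?thesis .
qed

lemma ub_int: assumes "y \<ge> 0"
  shows "upper_inc_Gamma (real (Suc j)) y = fact j * (\<Sum>n\<le>j. y^n * exp(-y) / fact n)"
proof -
  have nn: "0 \<le> 1 - (\<Sum>n\<le>j. (y^n * exp (-y)) / fact n)"
    using erlang_CDF_nonneg[of 1 j y] assms by (simp add: erlang_CDF_def)
  have "gN (real (Suc j)) {0..} = gN (real (Suc j)) ({0..<y} \<union> {y..})"
    using assms by (intro arg_cong[where f="gN _"]) auto
  also have "\<dots> = gN (real (Suc j)) {0..<y} + gN (real (Suc j)) {y..}"
    by (rule gN_split) auto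
  also have "gN (real (Suc j)) {0..<y} = gN (real (Suc j)) {0..y}"
    by (rule gN_cong_pt[of y]) auto
  finally have "ennreal (fact j) = ennreal ((1 - (\<Sum>n\<le>j. (y^n * exp (-y)) / fact n)) * fact j)
       + ennreal (upper_inc_Gamma (real (Suc j)) y)"
    using gN_full[of "real (Suc j)"] gN_Icc_int[OF assms, of j] ub_eq[of "real (Suc j)" y] assms
    by (simp add: Gamma_fact[of j, where 'a=real, simplified])
  also have "\<dots> = ennreal ((1 - (\<Sum>n\<le>j. (y^n * exp (-y)) / fact n)) * fact j
       + upper_inc_Gamma (real (Suc j)) y)"
    using nn ub_eq(2)[of "real (Suc j)" y] assms by (subst ennreal_plus) auto
  finally have "fact j = (1 - (\<Sum>n\<le>j. (y^n * exp (-y)) / fact n)) * fact j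
       + upper_inc_Gamma (real (Suc j)) y"
    using nn ub_eq(2)[of "real (Suc j)" y] assms by (subst (asm) ennreal_inj) auto
  then show ?thesis by (simp add: algebra_simps)
qed

lemma ub_mono: assumes "0 < a" "a \<le> b" "0 \<le> y"
  shows "upper_inc_Gamma a y / Gamma a \<le> upper_inc_Gamma b y / Gamma b"
proof -
  define c where "c = b - a"
  have c: "c \<ge> 0" using assms by (simp add: c_def)
  have b: "b > 0" using assms by simp
  have pw: "t powr (b-1) = t powr c * t powr (a-1)" for t
    by (simp add: c_def powr_add[symmetric])
  define Aa where "Aa = enn2real (gN a {0..<y})"
  define Ua where "Ua = enn2real (gN a {y..})"
  define Ab where "Ab = enn2real (gN b {0..<y})"
  define Ub where "Ub = enn2real (gN b {y..})"
  have eAa: "gN a {0..<y} = ennreal Aa" unfolding Aa_def by (rule gN_real) (use assms in auto)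
  have eUa: "gN a {y..} = ennreal Ua" unfolding Ua_def by (rule gN_real) (use assms in auto)
  have eAb: "gN b {0..<y} = ennreal Ab" unfolding Ab_def by (rule gN_real) (use assms b in auto)
  have eUb: "gN b {y..} = ennreal Ub" unfolding Ub_def by (rule gN_real) (use assms b in auto)
  have nn: "Aa \<ge> 0" "Ua \<ge> 0" "Ab \<ge> 0" "Ub \<ge> 0" by (auto simp: Aa_def Ua_def Ab_def Ub_def)
  have split: "gN x {0..} = gN x {0..<y} + gN x {y..}" for x
  proof -
    have "gN x {0..} = gN x ({0..<y} \<union> {y..})"
      using assms by (intro arg_cong[where f="gN _"]) auto
    also have "\<dots> = gN x {0..<y} + gN x {y..}" by (rule gN_split) auto
    finally show ?thesis .
  qed
  have Ga: "Gamma a = Aa + Ua"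
    using split[of a] gN_full[of a] assms eAa eUa nn Gamma_real_pos[of a]
    by (simp add: ennreal_plus[symmetric] del: ennreal_plus)
  have Gb: "Gamma b = Ab + Ub"
    using split[of b] gN_full[of b] b eAb eUb nn Gamma_real_pos[of b]
    by (simp add: ennreal_plus[symmetric] del: ennreal_plus)
  have ua: "upper_inc_Gamma a y = Ua" using ub_eq[of a y] assms eUa nn by simp
  have ubb: "upper_inc_Gamma b y = Ub" using ub_eq[of b y] assms b eUb nn by simp
  have I1: "gN b {0..<y} \<le> ennreal (y powr c) * gN a {0..<y}"
    unfolding gN_def
    apply (subst nn_integral_cmult[symmetric], simp)
    apply (intro nn_integral_mono)
    apply (auto split: split_indicator simp: ennreal_mult'[symmetric] pw intro!: ennreal_leI)
    subgoal for x
      using mult_right_mono[OF powr_mono2[OF c, of x y], of "x powr (a - 1) * exp (- x)"]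
      by (simp add: mult.assoc)
    done
  have I2: "ennreal (y powr c) * gN a {y..} \<le> gN b {y..}"
    unfolding gN_def
    apply (subst nn_integral_cmult[symmetric], simp)
    apply (intro nn_integral_mono)
    using assms
    apply (auto split: split_indicator simp: ennreal_mult'[symmetric] pw intro!: ennreal_leI)
    subgoal for x
      using mult_right_mono[OF powr_mono2[OF c, of y x], of "x powr (a - 1) * exp (- x)"]
      by (simp add: mult.assoc)
    done
  have r1: "Ab \<le> y powr c * Aa" using I1 eAa eAb nn
    by (simp add: ennreal_mult'[symmetric] ennreal_le_iff)
  have r2: "y powr c * Ua \<le> Ub" using I2 eUa eUb nn
    by (simp add: ennreal_mult'[symmetric] ennreal_le_iff)
  have "Ua * Ab \<le> Ub * Aa"
  proof -
    have "Ua * Ab \<le> Ua * (y powr c * Aa)" using r1 nn by (simp add: mult_left_mono)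
    also have "\<dots> = (y powr c * Ua) * Aa" by simp
    also have "\<dots> \<le> Ub * Aa" using r2 nn by (simp add: mult_right_mono)
    finally show ?thesis .
  qed
  then have "Ua * Gamma b \<le> Ub * Gamma a" using Ga Gb by (simp add: algebra_simps)
  then show ?thesis using ua ubb Gamma_real_pos[of a] Gamma_real_pos[of b] assms b
    by (simp add: divide_simps mult.commute)
qed


definition T :: "nat \<Rightarrow> real \<Rightarrow> real" where
  "T n y = exp(-y) * (\<Sum>m<n. y^m / fact m)"

lemma T_meas[measurable]: "T n \<in> borel_measurable borel"
  unfolding T_def by measurable

lemma T_cont: "isCont (T n) x"
  unfolding T_def by (intro continuous_intros) auto

lemma T_nonneg: "y \<ge> 0 \<Longrightarrow> T n y \<ge> 0"
  unfolding T_def by (intro mult_nonneg_nonneg sum_nonneg) auto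

lemma T_zero: "n \<ge> 1 \<Longrightarrow> T n 0 = 1"
proof -
  assume "n \<ge> 1"
  then have "(\<Sum>m<n. (0::real)^m / fact m) = (\<Sum>m\<in>{0}. (0::real)^m / fact m)"
    by (intro sum.mono_neutral_right) auto
  then show ?thesis by (simp add: T_def)
qed

lemma ub_T: "y \<ge> 0 \<Longrightarrow> upper_inc_Gamma (real (Suc j)) y / Gamma (real (Suc j)) = T (Suc j) y"
proof -
  assume y: "y \<ge> 0"
  have G: "Gamma (real (Suc j)) = fact j"
    using Gamma_fact[of j, where 'a=real] by (simp add: add.commute)
  show ?thesis
    using ub_int[OF y, of j] unfolding G T_def
    by (simp add: lessThan_Suc_atMost sum_distrib_left field_simps)
qed

lemma Kb: assumes "k > 0" "y \<ge> 0"
  shows "T (nat \<lfloor>k\<rfloor>) y \<le> upper_inc_Gamma k y / Gamma k"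
        "upper_inc_Gamma k y / Gamma k \<le> T (nat \<lceil>k\<rceil>) y"
proof -
  show "T (nat \<lfloor>k\<rfloor>) y \<le> upper_inc_Gamma k y / Gamma k"
  proof (cases "nat \<lfloor>k\<rfloor>")
    case 0
    then show ?thesis using ub_eq(2)[OF assms] Gamma_real_pos[OF assms(1)] by (simp add: T_def)
  next
    case (Suc j)
    then have "real (Suc j) \<le> k" using assms(1) by linarith
    then have "upper_inc_Gamma (real (Suc j)) y / Gamma (real (Suc j)) \<le> upper_inc_Gamma k y / Gamma k"
      by (intro ub_mono assms) auto
    then show ?thesis using ub_T[OF assms(2), of j] Suc by simp
  qed
  show "upper_inc_Gamma k y / Gamma k \<le> T (nat \<lceil>k\<rceil>) y"
  proof (cases "nat \<lceil>k\<rceil>")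
    case 0
    then show ?thesis using assms(1) by linarith
  next
    case (Suc j)
    then have "k \<le> real (Suc j)" using assms(1) by linarith
    then have "upper_inc_Gamma k y / Gamma k \<le> upper_inc_Gamma (real (Suc j)) y / Gamma (real (Suc j))"
      by (intro ub_mono assms) auto
    then show ?thesis using ub_T[OF assms(2), of j] Suc by simp
  qed
qed

lemma pow_exp_bound: "(x::real) \<ge> 0 \<Longrightarrow> x ^ n / fact n \<le> exp x"
proof -
  assume x: "x \<ge> 0"
  have "(\<Sum>i\<in>{n}. x^i / fact i) \<le> (\<Sum>i. x^i / fact i)"
    by (rule sum_le_suminf) (use x summable_exp_generic[of x] in \<open>auto simp: divide_inverse mult.commute\<close>)
  then show ?thesis by (simp add: exp_def divide_inverse mult.commute)
qed


lemma laplace_term_integrable: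
  fixes P :: "'a \<Rightarrow> real" and s :: real
  assumes "prob_space M" "P \<in> borel_measurable M" "AE \<omega> in M. P \<omega> \<ge> 0" "s > 0"
  shows "integrable M (\<lambda>\<omega>. P \<omega> ^ m * exp (- (1/s) * P \<omega>))"
proof -
  interpret prob_space M by fact
  have ci: "integrable M (\<lambda>_. fact m * s^m :: real)" by simp
  show ?thesis
  proof (rule Bochner_Integration.integrable_bound[OF ci])
    show "(\<lambda>\<omega>. P \<omega> ^ m * exp (- (1/s) * P \<omega>)) \<in> borel_measurable M" using assms(2) by measurable
    show "AE \<omega> in M. norm (P \<omega> ^ m * exp (- (1/s) * P \<omega>)) \<le> norm (fact m * s^m :: real)"
      using assms(3)
    proof eventually_elim
      case (elim \<omega>)
      define p where "p = P \<omega>"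
      have p: "p \<ge> 0" using elim p_def by simp
      have "(p/s)^m / fact m \<le> exp (p/s)" using pow_exp_bound[of "p/s" m] p assms(4) by simp
      then have "p^m \<le> fact m * s^m * exp (p/s)" using assms(4)
        by (simp add: power_divide field_simps)
      then have "p^m * exp (-(1/s) * p) \<le> fact m * s^m"
        by (simp add: exp_minus field_simps)
      then show ?case using p unfolding p_def[symmetric] by simp
    qed
  qed
qed

lemma S_sum_eq:
  fixes P :: "'a \<Rightarrow> real" and \<theta> \<beta> :: real
  assumes "prob_space M" "P \<in> borel_measurable M" "AE \<omega> in M. P \<omega> \<ge> 0" "\<theta> > 0" "\<beta> > 0"
  shows "integrable M (\<lambda>\<omega>. T n (P \<omega> / (\<theta>*\<beta>)))"
        "(\<integral>\<omega>. T n (P \<omega> / (\<theta>*\<beta>)) \<partial>M) = S_sum M P \<theta> \<beta> n"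
proof -
  define s where "s = \<theta>*\<beta>"
  have s: "s > 0" using assms by (simp add: s_def)
  have eq: "T n (p / s) = (\<Sum>m<n. (p ^ m * exp (- (1/s) * p)) * (s powi (- int m) / fact m))" for p
    unfolding T_def sum_distrib_left
    by (intro sum.cong) (auto simp: power_int_minus power_divide field_simps)
  have int: "integrable M (\<lambda>\<omega>. (P \<omega> ^ m * exp (- (1/s) * P \<omega>)) * (s powi (- int m) / fact m))" for m
    using laplace_term_integrable[OF assms(1-3) s, of m] by simp
  show "integrable M (\<lambda>\<omega>. T n (P \<omega> / (\<theta>*\<beta>)))"
    unfolding s_def[symmetric] eq by (rule Bochner_Integration.integrable_sum) (rule int)
  show "(\<integral>\<omega>. T n (P \<omega> / (\<theta>*\<beta>)) \<partial>M) = S_sum M P \<theta> \<beta> n"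
    unfolding s_def[symmetric] eq S_sum_def laplace_deriv_def
    apply (subst Bochner_Integration.integral_sum)
    using int apply simp
    apply (simp add: s_def)
    done
qed


theorem theorem1:
  fixes M :: "'a measure" and P J :: "'a \<Rightarrow> real" and k \<theta> \<beta> :: real
  assumes "prob_space M"
    and "P \<in> borel_measurable M" and "J \<in> borel_measurable M"
    and "AE \<omega> in M. P \<omega> \<ge> 0"
    and "k > 0" and "\<theta> > 0"
    and "\<And>z. z \<ge> 0 \<Longrightarrow>
           measure M {\<omega> \<in> space M. J \<omega> \<le> z} = 1 - upper_inc_Gamma k (z / \<theta>) / Gamma k"
    and "\<And>z. z < 0 \<Longrightarrow> measure M {\<omega> \<in> space M. J \<omega> \<le> z} = 0"
    and "prob_space.indep_var M borel P borel J"
    and "\<beta> > 0"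
  shows "S_sum M P \<theta> \<beta> (nat \<lfloor>k\<rfloor>) \<le> measure M {\<omega> \<in> space M. P \<omega> / J \<omega> \<le> \<beta>}
         \<and> measure M {\<omega> \<in> space M. P \<omega> / J \<omega> \<le> \<beta>} \<le> S_sum M P \<theta> \<beta> (nat \<lceil>k\<rceil>)"
proof -
  interpret prob_space M by fact
  note [measurable] = assms(2,3)
  define Q where "Q y = upper_inc_Gamma k y / Gamma k" for y
  define s where "s = \<theta> * \<beta>"
  have s: "s > 0" using assms by (simp add: s_def)
  define E where "E = {\<omega> \<in> space M. P \<omega> / J \<omega> \<le> \<beta>}"
  define f where "f = nat \<lfloor>k\<rfloor>"
  define c where "c = nat \<lceil>k\<rceil>"
  have c1: "c \<ge> 1"
  proof -
    have "0 < \<lceil>k\<rceil>" using assms(5) by simp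
    then show ?thesis by (simp add: c_def Suc_le_eq)
  qed
  have Kf: "y \<ge> 0 \<Longrightarrow> T f y \<le> Q y" and Kc: "y \<ge> 0 \<Longrightarrow> Q y \<le> T c y" for y
    using Kb[OF assms(5), of y] by (auto simp: Q_def f_def c_def)
  have Q0: "Q 0 = 1"
  proof -
    have "ennreal (upper_inc_Gamma k 0) = ennreal (Gamma k)"
      using ub_eq[OF assms(5), of 0] gN_full[OF assms(5)] by simp
    then have "upper_inc_Gamma k 0 = Gamma k"
      using ub_eq(2)[OF assms(5), of 0] Gamma_real_pos[OF assms(5)] by (subst (asm) ennreal_inj) auto
    then show ?thesis using Gamma_real_pos[OF assms(5)] by (simp add: Q_def)
  qed
  have J0: "measure M {\<omega>\<in>space M. J \<omega> \<le> 0} = 0"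
    using assms(7)[of 0] Q0 by (simp add: Q_def)
  have Jgt: "measure M {\<omega>\<in>space M. x < J \<omega>} = Q (x/\<theta>)" if x: "x \<ge> 0" for x
  proof -
    have "{\<omega>\<in>space M. x < J \<omega>} = space M - {\<omega>\<in>space M. J \<omega> \<le> x}" by auto
    then have "measure M {\<omega>\<in>space M. x < J \<omega>} = 1 - measure M {\<omega>\<in>space M. J \<omega> \<le> x}"
      by (simp add: prob_compl)
    then show ?thesis using assms(7)[OF x] by (simp add: Q_def)
  qed
  have Jge: "measure M {\<omega>\<in>space M. x \<le> J \<omega>} \<le> T c (x/\<theta>)" if x: "x \<ge> 0" for x
  proof (cases "x = 0")
    case True
    then show ?thesis using T_zero[OF c1] by simp
  next
    case False
    then have xp: "x > 0" using x by simp
    have lim: "((\<lambda>x'. T c (x'/\<theta>)) \<longlongrightarrow> T c (x/\<theta>)) (at_left x)"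
    proof -
      have "isCont (\<lambda>x'. T c (x'/\<theta>)) x"
        by (rule continuous_at_compose[OF _ T_cont, unfolded o_def]) (use assms(6) in \<open>intro continuous_intros, auto\<close>)
      then show ?thesis unfolding isCont_def by (rule tendsto_within_subset) auto
    qed
    have ev: "\<forall>\<^sub>F x' in at_left x. measure M {\<omega>\<in>space M. x \<le> J \<omega>} \<le> T c (x'/\<theta>)"
      using eventually_at_left_real[OF xp]
    proof eventually_elim
      case (elim x')
      then have x': "x' \<ge> 0" "x' < x" by auto
      have "measure M {\<omega>\<in>space M. x \<le> J \<omega>} \<le> measure M {\<omega>\<in>space M. x' < J \<omega>}"
        using x' by (intro finite_measure_mono) auto
      also have "\<dots> = Q (x'/\<theta>)" using Jgt[OF x'(1)] .
      also have "\<dots> \<le> T c (x'/\<theta>)" using Kc x' assms(6) by simp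
      finally show ?case .
    qed
    show ?thesis
      by (rule tendsto_le[OF _ lim tendsto_const ev]) simp
  qed
  define sl where "sl p = {j::real. p / j \<le> \<beta>}" for p
  have sl_sets[measurable]: "sl p \<in> sets borel" for p
  proof -
    have "{j \<in> space borel. p / j \<le> \<beta>} \<in> sets borel" by measurable
    then show ?thesis by (simp add: sl_def)
  qed
  have pre: "J -` sl p \<inter> space M = {\<omega>\<in>space M. p / J \<omega> \<le> \<beta>}" for p
    by (auto simp: sl_def)
  have low: "ennreal (T f (p/s)) \<le> emeasure (distr M borel J) (sl p)" if p: "p \<ge> 0" for p
  proof -
    have ps: "p/s = (p/\<beta>)/\<theta>" by (simp add: s_def)
    have "T f (p/s) \<le> Q ((p/\<beta>)/\<theta>)" using Kf[of "p/s"] p s assms(6,10) unfolding ps by simp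
    also have "\<dots> = measure M {\<omega>\<in>space M. p/\<beta> < J \<omega>}" using Jgt[of "p/\<beta>"] p assms(10) by simp
    also have "\<dots> \<le> measure M {\<omega>\<in>space M. p / J \<omega> \<le> \<beta>}"
    proof (intro finite_measure_mono)
      show "{\<omega> \<in> space M. p / \<beta> < J \<omega>} \<subseteq> {\<omega> \<in> space M. p / J \<omega> \<le> \<beta>}"
      proof safe
        fix \<omega> assume "\<omega> \<in> space M" "p / \<beta> < J \<omega>"
        moreover have "0 \<le> p/\<beta>" using p assms(10) by simp
        ultimately have J: "J \<omega> > 0" by linarith
        have "p < \<beta> * J \<omega>" using \<open>p / \<beta> < J \<omega>\<close> assms(10)
          by (auto simp: pos_divide_less_eq mult.commute)
        then show "p / J \<omega> \<le> \<beta>" using J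
          by (simp add: pos_divide_le_eq)
      qed
    qed simp
    finally show ?thesis
      by (simp add: emeasure_distr pre emeasure_eq_measure)
  qed
  have up: "emeasure (distr M borel J) (sl p) \<le> ennreal (T c (p/s))" if p: "p \<ge> 0" for p
  proof -
    have "measure M {\<omega>\<in>space M. p / J \<omega> \<le> \<beta>}
        \<le> measure M ({\<omega>\<in>space M. J \<omega> \<le> 0} \<union> {\<omega>\<in>space M. p/\<beta> \<le> J \<omega>})"
    proof (intro finite_measure_mono)
      show "{\<omega>\<in>space M. p / J \<omega> \<le> \<beta>} \<subseteq> {\<omega>\<in>space M. J \<omega> \<le> 0} \<union> {\<omega>\<in>space M. p/\<beta> \<le> J \<omega>}"
      proof safe
        fix \<omega> assume "\<omega> \<in> space M" "p / J \<omega> \<le> \<beta>" "\<not> p / \<beta> \<le> J \<omega>"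
        show "J \<omega> \<le> 0"
        proof (rule ccontr)
          assume "\<not> J \<omega> \<le> 0"
          then have "J \<omega> > 0" by simp
          then have "p \<le> \<beta> * J \<omega>" using \<open>p / J \<omega> \<le> \<beta>\<close> by (simp add: pos_divide_le_eq mult.commute)
          then have "p/\<beta> \<le> J \<omega>" using assms(10) by (simp add: pos_divide_le_eq mult.commute)
          with \<open>\<not> p/\<beta> \<le> J \<omega>\<close> show False by simp
        qed
      qed
    qed simp
    also have "\<dots> \<le> measure M {\<omega>\<in>space M. J \<omega> \<le> 0} + measure M {\<omega>\<in>space M. p/\<beta> \<le> J \<omega>}"
      by (intro measure_Un_le) auto
    also have "\<dots> \<le> T c ((p/\<beta>)/\<theta>)" using J0 Jge[of "p/\<beta>"] p assms(10) by simp
    also have "\<dots> = T c (p/s)" by (simp add: s_def mult.commute)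
    finally show ?thesis
      by (simp add: emeasure_distr pre emeasure_eq_measure ennreal_leI)
  qed
  interpret sJ: prob_space "distr M borel J" by (rule prob_space_distr) simp
  define A where "A = {x \<in> space (borel \<Otimes>\<^sub>M borel). fst x / snd x \<le> (\<beta>::real)}"
  have A[measurable]: "A \<in> sets (borel \<Otimes>\<^sub>M borel)" unfolding A_def by measurable
  have ind: "distr M borel P \<Otimes>\<^sub>M distr M borel J = distr M (borel \<Otimes>\<^sub>M borel) (\<lambda>x. (P x, J x))"
    using assms(9) by (simp add: indep_var_distribution_eq)
  have slA: "Pair p -` A = sl p" for p by (auto simp: A_def sl_def space_pair_measure)
  have "emeasure M E = emeasure (distr M (borel \<Otimes>\<^sub>M borel) (\<lambda>x. (P x, J x))) A"
  proof -
    have "emeasure (distr M (borel \<Otimes>\<^sub>M borel) (\<lambda>x. (P x, J x))) A = emeasure M ((\<lambda>x. (P x, J x)) -` A \<inter> space M)"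
      by (rule emeasure_distr) (simp_all add: A)
    moreover have "(\<lambda>x. (P x, J x)) -` A \<inter> space M = E" by (auto simp: E_def A_def space_pair_measure)
    ultimately show ?thesis by simp
  qed
  also have "\<dots> = emeasure (distr M borel P \<Otimes>\<^sub>M distr M borel J) A" by (simp add: ind)
  also have "\<dots> = (\<integral>\<^sup>+ p. emeasure (distr M borel J) (Pair p -` A) \<partial>distr M borel P)"
    by (rule sJ.emeasure_pair_measure_alt) simp
  also have "\<dots> = (\<integral>\<^sup>+ \<omega>. emeasure (distr M borel J) (sl (P \<omega>)) \<partial>M)"
    by (subst nn_integral_distr) (auto simp: slA intro!: sJ.measurable_emeasure_Pair[of A, simplified slA])
  finally have EM: "emeasure M E = (\<integral>\<^sup>+ \<omega>. emeasure (distr M borel J) (sl (P \<omega>)) \<partial>M)" .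
  have intf: "(\<integral>\<^sup>+ \<omega>. ennreal (T n (P \<omega> / s)) \<partial>M) = ennreal (S_sum M P \<theta> \<beta> n)" for n
  proof -
    have "(\<integral>\<^sup>+ \<omega>. ennreal (T n (P \<omega> / s)) \<partial>M) = ennreal (\<integral>\<omega>. T n (P \<omega> / s) \<partial>M)"
      apply (rule nn_integral_eq_integral)
      using S_sum_eq(1)[OF assms(1,2,4,6,10), of n] apply (simp add: s_def)
      using assms(4) by eventually_elim (rule T_nonneg, use s in simp)
    then show ?thesis using S_sum_eq(2)[OF assms(1,2,4,6,10), of n] by (simp add: s_def)
  qed
  have Snn: "S_sum M P \<theta> \<beta> n \<ge> 0" for n
  proof -
    have "0 \<le> (\<integral>\<omega>. T n (P \<omega> / s) \<partial>M)"
    proof (intro integral_nonneg_AE)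
      show "AE x in M. 0 \<le> T n (P x / s)"
        using assms(4) by eventually_elim (rule T_nonneg, use s in simp)
    qed
    then show ?thesis using S_sum_eq(2)[OF assms(1,2,4,6,10), of n] by (simp add: s_def)
  qed
  have "ennreal (S_sum M P \<theta> \<beta> f) \<le> emeasure M E"
    unfolding EM intf[symmetric]
    by (intro nn_integral_mono_AE) (use assms(4) in \<open>eventually_elim, simp add: low\<close>)
  then have L: "S_sum M P \<theta> \<beta> f \<le> measure M E"
    by (simp add: emeasure_eq_measure)
  have "emeasure M E \<le> ennreal (S_sum M P \<theta> \<beta> c)"
    unfolding EM intf[symmetric]
    by (intro nn_integral_mono_AE) (use assms(4) in \<open>eventually_elim, simp add: up\<close>)
  then have U: "measure M E \<le> S_sum M P \<theta> \<beta> c"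
    using Snn[of c] by (simp add: emeasure_eq_measure)
  show ?thesis using L U by (simp add: E_def f_def c_def)
qed

end
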